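(* For all integers $n\ge2$ and $k\ge1$, the number $T_{n,k}$ of triangles (subgraphs isomorphic to $K_3$) of $H_{n,k}$ is $$T_{n,k}=\frac{1}{2}(n-2)\left(1-\frac{n}{3}-(n-1)^{k+1}+\frac{2}{3}n^k(2n-3)\right).$$
   Context: Let $n\ge 2$ and $k\ge 1$ be integers. $H_{n,k}$ is the simple undirected graph with vertex set $V_{n,k}=\mathbb{Z}_n^k$ (so $|V_{n,k}|=n^k$), whose vertices are written as strings $x_1x_2\ldots x_k$ with $x_j\in\mathbb{Z}_n=\{0,1,\ldots,n-1\}$. Two distinct vertices are adjacent if and only if they are related by one of the following rules. For $i=0$ the prefix $x_1\ldots x_i$ is empty, and "$0\ldots0$" denotes a string of zeros completing the word to length $k$. (R1) $x_1\ldots x_{k-1}x_k\sim x_1\ldots x_{k-1}y_k$ whenever $y_k\neq x_k$. (R2) For $0\le i\le k-2$: $x_1\ldots x_i0\ldots0\sim x_1\ldots x_ix_{i+1}\ldots x_k$ whenever $x_j\neq 0$ for all $i+1\le j\le k$. (R3) For $1\le i\le k-1$: $x_1\ldots x_{i-1}x_i0\ldots0\sim x_1\ldots x_{i-1}y_i0\ldots0$ whenever $x_i,y_i\neq0$ and $x_i\ne y_i$. In particular, $H_{n,1}$ is the complete graph $K_n$. *)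

theory Defs
  imports Complex_Main
begin

text \<open>Vertices of H_{n,k}: words x_1 ... x_k over Z_n = {0,...,n-1},
  represented as lists of length k (list index j corresponds to x_{j+1}).\<close>
definition hverts :: "nat \<Rightarrow> nat \<Rightarrow> nat list set" where
  "hverts n k = {xs. length xs = k \<and> set xs \<subseteq> {..<n}}"

definition rule1 :: "nat \<Rightarrow> nat list \<Rightarrow> nat list \<Rightarrow> bool" where
  "rule1 k x y \<longleftrightarrow> (\<exists>p a b. length p = k - 1 \<and> x = p @ [a] \<and> y = p @ [b] \<and> a \<noteq> b)"

definition rule2 :: "nat \<Rightarrow> nat list \<Rightarrow> nat list \<Rightarrow> bool" where
  "rule2 k x y \<longleftrightarrow> (\<exists>i. i + 2 \<le> k \<and> length y = k \<and>
       x = take i y @ replicate (k - i) 0 \<and> (\<forall>j. i \<le> j \<and> j < k \<longrightarrow> y ! j \<noteq> 0))"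

definition rule3 :: "nat \<Rightarrow> nat list \<Rightarrow> nat list \<Rightarrow> bool" where
  "rule3 k x y \<longleftrightarrow> (\<exists>i p a b. 1 \<le> i \<and> i + 1 \<le> k \<and> length p = i - 1 \<and>
       a \<noteq> 0 \<and> b \<noteq> 0 \<and> a \<noteq> b \<and>
       x = p @ [a] @ replicate (k - i) 0 \<and> y = p @ [b] @ replicate (k - i) 0)"

definition hadj :: "nat \<Rightarrow> nat \<Rightarrow> nat list \<Rightarrow> nat list \<Rightarrow> bool" where
  "hadj n k x y \<longleftrightarrow> x \<in> hverts n k \<and> y \<in> hverts n k \<and> x \<noteq> y \<and>
     (rule1 k x y \<or> rule2 k x y \<or> rule2 k y x \<or> rule3 k x y)"

definition htriangles :: "nat \<Rightarrow> nat \<Rightarrow> nat list set set" where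
  "htriangles n k = {T. T \<subseteq> hverts n k \<and> card T = 3 \<and>
      (\<forall>x\<in>T. \<forall>y\<in>T. x \<noteq> y \<longrightarrow> hadj n k x y)}"

end

theory Submission
  imports Defs
begin

lemma rule1_Cons:
  assumes "k \<ge> 1" "length x = k" "length y = k"
  shows "rule1 (Suc k) (a#x) (b#y) \<longleftrightarrow> a = b \<and> rule1 k x y"
proof
  assume "rule1 (Suc k) (a#x) (b#y)"
  then obtain p c d where p: "length p = k" "a#x = p@[c]" "b#y = p@[d]" "c\<noteq>d"
    unfolding rule1_def by auto
  then obtain q p' where "p = q#p'" using assms by (cases p) auto
  then show "a = b \<and> rule1 k x y" using p unfolding rule1_def by auto
next
  assume "a = b \<and> rule1 k x y"
  then obtain p c d where p: "a = b" "length p = k - 1" "x = p@[c]" "y = p@[d]" "c\<noteq>d"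
    unfolding rule1_def by auto
  show "rule1 (Suc k) (a#x) (b#y)" unfolding rule1_def
    by (rule exI[of _ "a#p"]) (use p assms in auto)
qed

lemma rule2_Cons:
  assumes "k \<ge> 1" "length x = k" "length y = k"
  shows "rule2 (Suc k) (a#x) (b#y) \<longleftrightarrow>
     (a = 0 \<and> x = replicate k 0 \<and> b \<noteq> 0 \<and> 0 \<notin> set y) \<or> (a = b \<and> rule2 k x y)"
proof
  assume "rule2 (Suc k) (a#x) (b#y)"
  then obtain i where i: "i + 2 \<le> Suc k" "a#x = take i (b#y) @ replicate (Suc k - i) 0"
     "\<forall>j. i \<le> j \<and> j < Suc k \<longrightarrow> (b#y) ! j \<noteq> 0"
    unfolding rule2_def by auto
  show "(a = 0 \<and> x = replicate k 0 \<and> b \<noteq> 0 \<and> 0 \<notin> set y) \<or> (a = b \<and> rule2 k x y)"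
  proof (cases i)
    case 0
    then have "a = 0 \<and> x = replicate k 0" using i by auto
    moreover have "b \<noteq> 0" using i(3) 0 by force
    moreover have "0 \<notin> set y"
    proof
      assume "0 \<in> set y"
      then obtain j where "j < k" "y ! j = 0" using assms by (auto simp: in_set_conv_nth)
      then show False using i(3)[rule_format, of "Suc j"] 0 by auto
    qed
    ultimately show ?thesis by blast
  next
    case (Suc i')
    then have ab: "a = b" "x = take i' y @ replicate (k - i') 0" using i by auto
    have "rule2 k x y" unfolding rule2_def
    proof (rule exI[of _ i'], intro conjI allI impI)
      fix j assume "i' \<le> j \<and> j < k"
      then show "y ! j \<noteq> 0" using i(3)[rule_format, of "Suc j"] Suc by auto
    qed (use i Suc ab assms in auto)
    then show ?thesis using ab by blast
  qed
next
  assume h: "(a = 0 \<and> x = replicate k 0 \<and> b \<noteq> 0 \<and> 0 \<notin> set y) \<or> (a = b \<and> rule2 k x y)"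
  show "rule2 (Suc k) (a#x) (b#y)"
  proof (cases "a = 0 \<and> x = replicate k 0 \<and> b \<noteq> 0 \<and> 0 \<notin> set y")
    case True
    show ?thesis unfolding rule2_def
    proof (rule exI[of _ 0], intro conjI allI impI)
      fix j assume "0 \<le> j \<and> j < Suc k"
      then show "(b#y) ! j \<noteq> 0" using True assms
        by (cases j) (auto simp: in_set_conv_nth)
    qed (use True assms in auto)
  next
    case False
    then obtain i where i: "a = b" "i + 2 \<le> k" "x = take i y @ replicate (k - i) 0"
      "\<forall>j. i \<le> j \<and> j < k \<longrightarrow> y ! j \<noteq> 0" using h unfolding rule2_def by auto
    show ?thesis unfolding rule2_def
    proof (rule exI[of _ "Suc i"], intro conjI allI impI)
      fix j assume "Suc i \<le> j \<and> j < Suc k"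
      then show "(b#y) ! j \<noteq> 0" using i by (cases j) auto
    qed (use i assms in auto)
  qed
qed

lemma rule3_Cons:
  assumes "k \<ge> 1" "length x = k" "length y = k"
  shows "rule3 (Suc k) (a#x) (b#y) \<longleftrightarrow>
     (a \<noteq> 0 \<and> b \<noteq> 0 \<and> a \<noteq> b \<and> x = replicate k 0 \<and> y = replicate k 0) \<or> (a = b \<and> rule3 k x y)"
proof
  assume "rule3 (Suc k) (a#x) (b#y)"
  then obtain i p c d where i: "1 \<le> i" "i + 1 \<le> Suc k" "length p = i - 1" "c \<noteq> 0" "d \<noteq> 0" "c \<noteq> d"
     "a#x = p @ [c] @ replicate (Suc k - i) 0" "b#y = p @ [d] @ replicate (Suc k - i) 0"
    unfolding rule3_def by blast
  show "(a \<noteq> 0 \<and> b \<noteq> 0 \<and> a \<noteq> b \<and> x = replicate k 0 \<and> y = replicate k 0) \<or> (a = b \<and> rule3 k x y)"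
  proof (cases p)
    case Nil
    then have "i = 1" using i by auto
    then show ?thesis using i Nil by auto
  next
    case (Cons q p')
    have "a = b" using i Cons by auto
    moreover have "rule3 k x y" unfolding rule3_def
      apply (rule exI[of _ "i - 1"], rule exI[of _ p'], rule exI[of _ c], rule exI[of _ d])
      using i Cons by auto
    ultimately show ?thesis by blast
  qed
next
  assume h: "(a \<noteq> 0 \<and> b \<noteq> 0 \<and> a \<noteq> b \<and> x = replicate k 0 \<and> y = replicate k 0) \<or> (a = b \<and> rule3 k x y)"
  show "rule3 (Suc k) (a#x) (b#y)"
  proof (cases "a \<noteq> 0 \<and> b \<noteq> 0 \<and> a \<noteq> b \<and> x = replicate k 0 \<and> y = replicate k 0")
    case True
    show ?thesis unfolding rule3_def
      apply (rule exI[of _ 1], rule exI[of _ "[]"], rule exI[of _ a], rule exI[of _ b])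
      using True assms by auto
  next
    case False
    then obtain i p c d where i: "a = b" "1 \<le> i" "i + 1 \<le> k" "length p = i - 1" "c \<noteq> 0" "d \<noteq> 0" "c \<noteq> d"
     "x = p @ [c] @ replicate (k - i) 0" "y = p @ [d] @ replicate (k - i) 0"
      using h unfolding rule3_def by blast
    show ?thesis unfolding rule3_def
      apply (rule exI[of _ "Suc i"], rule exI[of _ "a#p"], rule exI[of _ c], rule exI[of _ d])
      using i by auto
  qed
qed

lemma hverts_Cons: "a#x \<in> hverts n (Suc k) \<longleftrightarrow> a < n \<and> x \<in> hverts n k"
  unfolding hverts_def by auto

lemma hverts_len: "x \<in> hverts n k \<Longrightarrow> length x = k"
  unfolding hverts_def by auto

lemma hadj_sym: "hadj n k x y \<Longrightarrow> hadj n k y x"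
  unfolding hadj_def rule1_def rule3_def by blast

lemma hadj_same:
  assumes "k \<ge> 1"
  shows "hadj n (Suc k) (a#x) (a#y) \<longleftrightarrow> a < n \<and> hadj n k x y"
proof (cases "x \<in> hverts n k \<and> y \<in> hverts n k")
  case True
  then have l: "length x = k" "length y = k" by (auto simp: hverts_len)
  show ?thesis unfolding hadj_def hverts_Cons
    using rule1_Cons[OF assms l] rule2_Cons[OF assms l] rule2_Cons[OF assms l(2) l(1)]
      rule3_Cons[OF assms l] True by auto
next
  case False
  then show ?thesis unfolding hadj_def hverts_Cons by auto
qed

lemma hadj_cross:
  assumes "k \<ge> 1" "a \<noteq> b"
  shows "hadj n (Suc k) (a#x) (b#y) \<longleftrightarrow> a < n \<and> b < n \<and> x \<in> hverts n k \<and> y \<in> hverts n k \<and>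
    ((a = 0 \<and> x = replicate k 0 \<and> b \<noteq> 0 \<and> 0 \<notin> set y) \<or>
     (b = 0 \<and> y = replicate k 0 \<and> a \<noteq> 0 \<and> 0 \<notin> set x) \<or>
     (a \<noteq> 0 \<and> b \<noteq> 0 \<and> x = replicate k 0 \<and> y = replicate k 0))"
proof (cases "x \<in> hverts n k \<and> y \<in> hverts n k")
  case True
  then have l: "length x = k" "length y = k" by (auto simp: hverts_len)
  show ?thesis unfolding hadj_def hverts_Cons
    using rule1_Cons[OF assms(1) l] rule2_Cons[OF assms(1) l] rule2_Cons[OF assms(1) l(2) l(1)]
      rule3_Cons[OF assms(1) l] True assms(2) by auto
next
  case False
  then show ?thesis unfolding hadj_def hverts_Cons by auto
qed

lemma nonzero_adj:
  assumes "hadj n m v w" "0 \<notin> set v" "0 \<notin> set w"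
  shows "rule1 m v w"
proof -
  have "\<not> rule2 m v w"
  proof
    assume "rule2 m v w"
    then obtain i where "i + 2 \<le> m" "v = take i w @ replicate (m - i) 0" unfolding rule2_def by auto
    then have "0 \<in> set v" by auto
    then show False using assms by auto
  qed
  moreover have "\<not> rule2 m w v"
  proof
    assume "rule2 m w v"
    then obtain i where "i + 2 \<le> m" "w = take i v @ replicate (m - i) 0" unfolding rule2_def by auto
    then have "0 \<in> set w" by auto
    then show False using assms by auto
  qed
  moreover have "\<not> rule3 m v w"
  proof
    assume "rule3 m v w"
    then obtain i p a where "i + 1 \<le> m" "v = p @ [a] @ replicate (m - i) 0" unfolding rule3_def by auto
    then have "0 \<in> set v" by auto
    then show False using assms by auto
  qed
  ultimately show ?thesis using assms(1) unfolding hadj_def by auto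
qed

definition Snz :: "nat \<Rightarrow> nat \<Rightarrow> nat list set" where
  "Snz n k = {xs. set xs \<subseteq> {1..<n} \<and> length xs = k}"

definition P1 :: "nat \<Rightarrow> nat \<Rightarrow> nat list set set" where
  "P1 n k = (\<lambda>(a,T). (\<lambda>x. a # x) ` T) ` ({..<n} \<times> htriangles n k)"

definition P2 :: "nat \<Rightarrow> nat \<Rightarrow> nat list set set" where
  "P2 n k = (\<lambda>(p,B). insert (replicate (Suc k) 0) ((\<lambda>c. p @ [c]) ` B)) `
      (Snz n k \<times> {B. B \<subseteq> {1..<n} \<and> card B = 2})"

definition P3 :: "nat \<Rightarrow> nat \<Rightarrow> nat list set set" where
  "P3 n k = {T. T \<subseteq> (\<lambda>a. a # replicate k 0) ` {1..<n} \<and> card T = 3}"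

lemma nz_sub: "x \<in> hverts n m \<Longrightarrow> 0 \<notin> set x \<Longrightarrow> set x \<subseteq> {1..<n}"
proof
  fix y assume "x \<in> hverts n m" "0 \<notin> set x" "y \<in> set x"
  then have "y < n" unfolding hverts_def by auto
  moreover have "y \<noteq> 0" using \<open>0 \<notin> set x\<close> \<open>y \<in> set x\<close> by metis
  ultimately show "y \<in> {1..<n}" by simp
qed

lemma z0_case:
  assumes k: "k \<ge> 1" and u: "u = replicate (Suc k) 0"
    and uv: "hadj n (Suc k) u v" and uw: "hadj n (Suc k) u w" and vw: "hadj n (Suc k) v w"
    and hv: "hd v \<noteq> 0"
  shows "{u,v,w} \<in> P2 n k"
proof -
  have uc: "u = 0 # replicate k 0" using u by simp
  have vV: "v \<in> hverts n (Suc k)" and wV: "w \<in> hverts n (Suc k)" using uv uw unfolding hadj_def by auto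
  obtain b y where v: "v = b # y" using vV by (cases v) (auto simp: hverts_def)
  obtain c z where w: "w = c # z" using wV by (cases w) (auto simp: hverts_def)
  have b0: "b \<noteq> 0" using hv v by simp
  have "0 \<notin> set y" using uv hadj_cross[OF k, of 0 b n "replicate k 0" y] b0 uc v by auto
  then have nzv: "0 \<notin> set v" using v b0 by simp
  have c0: "c \<noteq> 0"
  proof
    assume c: "c = 0"
    then have "hadj n (Suc k) (c#z) (b#y)" using vw v w hadj_sym by blast
    then have "z = replicate k 0" using hadj_cross[OF k, of c b n z y] c b0 by auto
    then have "w = u" using w c uc by simp
    then show False using uw unfolding hadj_def by auto
  qed
  have "0 \<notin> set z" using uw hadj_cross[OF k, of 0 c n "replicate k 0" z] c0 uc w by auto
  then have nzw: "0 \<notin> set w" using w c0 by simp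
  have "rule1 (Suc k) v w" using nonzero_adj[OF vw nzv nzw] .
  then obtain p d e where p: "length p = k" "v = p @ [d]" "w = p @ [e]" "d \<noteq> e"
    unfolding rule1_def by auto
  have "set v \<subseteq> {1..<n}" using vV nzv by (rule nz_sub)
  then have pS: "p \<in> Snz n k" and dS: "d \<in> {1..<n}" using p unfolding Snz_def by auto
  have "set w \<subseteq> {1..<n}" using wV nzw by (rule nz_sub)
  then have eS: "e \<in> {1..<n}" using p by auto
  have eq: "{u,v,w} = insert (replicate (Suc k) 0) ((\<lambda>c. p @ [c]) ` {d,e})" using u p by auto
  have mem: "(p, {d,e}) \<in> Snz n k \<times> {B. B \<subseteq> {1..<n} \<and> card B = 2}"
    using pS dS eS p(4) by auto
  show ?thesis unfolding P2_def
    apply (rule image_eqI[OF _ mem]) using eq by simp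
qed

lemma c_case_aux:
  assumes k: "k \<ge> 1" and a0: "a \<noteq> 0" and ac: "a \<noteq> c"
    and adj: "hadj n (Suc k) (a # replicate k 0) (c # z)"
  shows "c \<noteq> 0 \<and> z = replicate k 0 \<and> c < n"
proof -
  have "0 \<in> set (replicate k (0::nat))" using k by simp
  then show ?thesis using adj hadj_cross[OF k ac, of n "replicate k 0" z] a0 by auto
qed

lemma c_case:
  assumes k: "k \<ge> 1" and a0: "a \<noteq> 0" and b0: "b \<noteq> 0" and ab: "a \<noteq> b"
    and uw: "hadj n (Suc k) (a # replicate k 0) w" and vw: "hadj n (Suc k) (b # replicate k 0) w"
  shows "w \<in> (\<lambda>a. a # replicate k 0) ` {1..<n}"
proof -
  have wV: "w \<in> hverts n (Suc k)" using uw unfolding hadj_def by auto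
  obtain c z where w: "w = c # z" using wV by (cases w) (auto simp: hverts_def)
  have "c \<noteq> 0 \<and> z = replicate k 0 \<and> c < n"
  proof (cases "c = a")
    case True
    then have "b \<noteq> c" using ab by simp
    then show ?thesis using c_case_aux[OF k b0] vw w by blast
  next
    case False
    then have "a \<noteq> c" by simp
    then show ?thesis using c_case_aux[OF k a0] uw w by blast
  qed
  then show ?thesis using w by auto
qed

lemma htri_facts:
  assumes "T \<in> htriangles n m"
  shows "T \<subseteq> hverts n m" "card T = 3" "\<And>x y. x \<in> T \<Longrightarrow> y \<in> T \<Longrightarrow> x \<noteq> y \<Longrightarrow> hadj n m x y"
  using assms unfolding htriangles_def by auto

lemma decomp_sub:
  assumes k: "k \<ge> 1" and T: "T \<in> htriangles n (Suc k)"
  shows "T \<in> P1 n k \<union> P2 n k \<union> P3 n k"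
proof -
  note TV = htri_facts(1)[OF T] and c3 = htri_facts(2)[OF T] and adj = htri_facts(3)[OF T]
  have ne: "\<And>x. x \<in> T \<Longrightarrow> x \<noteq> []" using TV by (auto simp: hverts_def)
  show ?thesis
  proof (cases "\<exists>u\<in>T. \<exists>v\<in>T. hd u \<noteq> hd v")
    case False
    have "T \<noteq> {}" using c3 by auto
    then obtain u0 where u0: "u0 \<in> T" by blast
    define a where "a = hd u0"
    have hdT: "\<And>u. u \<in> T \<Longrightarrow> hd u = a" using False u0 unfolding a_def by blast
    have col: "\<And>u. u \<in> T \<Longrightarrow> a # tl u = u" using hdT ne by (metis list.collapse)
    have Teq: "T = (\<lambda>x. a # x) ` (tl ` T)"
    proof -
      have "(\<lambda>x. a # x) ` (tl ` T) = (\<lambda>u. a # tl u) ` T" by (simp add: image_image)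
      also have "\<dots> = T" using col by (simp cong: image_cong)
      finally show ?thesis by simp
    qed
    have inj: "inj_on tl T" using col by (metis inj_onI)
    have "u0 \<in> hverts n (Suc k)" using TV u0 by blast
    then have "a # tl u0 \<in> hverts n (Suc k)" using col[OF u0] by simp
    then have an: "a < n" by (simp add: hverts_Cons)
    have "tl ` T \<in> htriangles n k"
      unfolding htriangles_def
    proof (intro CollectI conjI ballI impI)
      show "tl ` T \<subseteq> hverts n k"
      proof
        fix x assume "x \<in> tl ` T"
        then obtain u where u: "u \<in> T" "x = tl u" by blast
        have "u \<in> hverts n (Suc k)" using TV u by blast
        then have "a # x \<in> hverts n (Suc k)" using col[OF u(1)] u(2) by simp
        then show "x \<in> hverts n k" by (simp add: hverts_Cons)
      qed
      show "card (tl ` T) = 3" using card_image[OF inj] c3 by simp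
      fix x y assume x: "x \<in> tl ` T" and y: "y \<in> tl ` T" and xy: "x \<noteq> y"
      obtain u where u: "u \<in> T" "x = tl u" using x by auto
      obtain v where v: "v \<in> T" "y = tl v" using y by auto
      have e: "a # x = u" "a # y = v" using col u v by simp_all
      then have "u \<noteq> v" using xy by auto
      then have "hadj n (Suc k) (a # x) (a # y)" using adj[OF u(1) v(1)] e by simp
      then show "hadj n k x y" using hadj_same[OF k] by auto
    qed
    moreover have "(\<lambda>(a,T). (\<lambda>x. a # x) ` T) (a, tl ` T) = T"
    proof -
      have "(\<lambda>(a,T). (\<lambda>x. a # x) ` T) (a, tl ` T) = (\<lambda>x. a # x) ` (tl ` T)" by simp
      then show ?thesis using Teq by (rule trans[OF _ sym])
    qed
    ultimately have "T \<in> P1 n k" unfolding P1_def using an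
      by (metis (no_types, lifting) SigmaI image_eqI lessThan_iff)
    then show ?thesis by simp
  next
    case True
    then obtain u v where u: "u \<in> T" and v: "v \<in> T" and huv: "hd u \<noteq> hd v" by blast
    then have uv: "u \<noteq> v" by auto
    have "card (T - {u,v}) = 1" using c3 u v uv
      by (simp add: card_Diff_subset)
    then obtain w where w: "T - {u,v} = {w}" by (meson card_1_singletonE)
    then have Tuvw: "T = {u,v,w}" and wu: "w \<noteq> u" and wv: "w \<noteq> v" using u v by auto
    have wT: "w \<in> T" using Tuvw by auto
    have Auv: "hadj n (Suc k) u v" "hadj n (Suc k) v u" using adj u v uv by auto
    have Auw: "hadj n (Suc k) u w" "hadj n (Suc k) w u" using adj u wT wu by auto
    have Avw: "hadj n (Suc k) v w" "hadj n (Suc k) w v" using adj v wT wv by auto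
    obtain a x where ux: "u = a # x" using ne[OF u] by (cases u) auto
    obtain b y where vy: "v = b # y" using ne[OF v] by (cases v) auto
    have ab: "a \<noteq> b" using huv ux vy by simp
    have auv: "hadj n (Suc k) (a#x) (b#y)" using adj[OF u v uv] ux vy by simp
    consider "a = 0 \<and> x = replicate k 0 \<and> b \<noteq> 0"
      | "b = 0 \<and> y = replicate k 0 \<and> a \<noteq> 0"
      | "a \<noteq> 0 \<and> b \<noteq> 0 \<and> x = replicate k 0 \<and> y = replicate k 0"
    proof -
      have "(a = 0 \<and> x = replicate k 0 \<and> b \<noteq> 0 \<and> 0 \<notin> set y) \<or>
     (b = 0 \<and> y = replicate k 0 \<and> a \<noteq> 0 \<and> 0 \<notin> set x) \<or>
     (a \<noteq> 0 \<and> b \<noteq> 0 \<and> x = replicate k 0 \<and> y = replicate k 0)"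
        using hadj_cross[OF k ab, of n x y] auv by simp
      then show "(a = 0 \<and> x = replicate k 0 \<and> b \<noteq> 0 \<Longrightarrow> thesis) \<Longrightarrow>
        (b = 0 \<and> y = replicate k 0 \<and> a \<noteq> 0 \<Longrightarrow> thesis) \<Longrightarrow>
        (a \<noteq> 0 \<and> b \<noteq> 0 \<and> x = replicate k 0 \<and> y = replicate k 0 \<Longrightarrow> thesis) \<Longrightarrow> thesis"
        by blast
    qed
    then show ?thesis
    proof cases
      case 1
      have "{u,v,w} \<in> P2 n k"
        by (rule z0_case[OF k _ Auv(1) Auw(1) Avw(1)]) (use 1 ux vy in auto)
      then show ?thesis using Tuvw by simp
    next
      case 2
      have "{v,u,w} \<in> P2 n k"
        by (rule z0_case[OF k _ Auv(2) Avw(1) Auw(1)]) (use 2 ux vy in auto)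
      then show ?thesis using Tuvw by (simp add: insert_commute)
    next
      case 3
      have "w \<in> (\<lambda>a. a # replicate k 0) ` {1..<n}"
        by (rule c_case[OF k, of a b]) (use 3 ab ux vy Auw Avw in auto)
      moreover have "u \<in> (\<lambda>a. a # replicate k 0) ` {1..<n}" "v \<in> (\<lambda>a. a # replicate k 0) ` {1..<n}"
      proof -
        have "a < n" "b < n" using TV u v ux vy hverts_Cons by blast+
        then show "u \<in> (\<lambda>a. a # replicate k 0) ` {1..<n}" "v \<in> (\<lambda>a. a # replicate k 0) ` {1..<n}"
          using 3 ux vy by auto
      qed
      ultimately have "T \<in> P3 n k" unfolding P3_def using Tuvw c3 by auto
      then show ?thesis by simp
    qed
  qed
qed

lemma P1_sub:
  assumes k: "k \<ge> 1"
  shows "P1 n k \<subseteq> htriangles n (Suc k)"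
proof
  fix T assume "T \<in> P1 n k"
  then obtain a T' where a: "a < n" and T': "T' \<in> htriangles n k" and T: "T = (\<lambda>x. a # x) ` T'"
    unfolding P1_def by auto
  note TV = htri_facts(1)[OF T'] and c3 = htri_facts(2)[OF T'] and adj = htri_facts(3)[OF T']
  have inj: "inj_on (\<lambda>x. a # x) T'" by (simp add: inj_on_def)
  show "T \<in> htriangles n (Suc k)" unfolding htriangles_def
  proof (intro CollectI conjI ballI impI)
    show "T \<subseteq> hverts n (Suc k)" using TV a T hverts_Cons by auto
    show "card T = 3" using card_image[OF inj] c3 T by simp
    fix x y assume "x \<in> T" "y \<in> T" "x \<noteq> y"
    then obtain x' y' where "x' \<in> T'" "y' \<in> T'" "x = a # x'" "y = a # y'" "x' \<noteq> y'" using T by auto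
    then show "hadj n (Suc k) x y" using adj hadj_same[OF k] a by auto
  qed
qed

lemma z0_adj:
  assumes k: "k \<ge> 1" and p: "p \<in> Snz n k" and c: "c \<in> {1..<n}"
  shows "hadj n (Suc k) (replicate (Suc k) 0) (p @ [c])"
proof -
  have y: "set (p @ [c]) \<subseteq> {1..<n}" "length (p @ [c]) = Suc k" using p c unfolding Snz_def by auto
  have "rule2 (Suc k) (replicate (Suc k) 0) (p @ [c])" unfolding rule2_def
  proof (rule exI[of _ 0], intro conjI allI impI)
    fix j assume "0 \<le> j \<and> j < Suc k"
    then have "(p @ [c]) ! j \<in> set (p @ [c])" using y(2) by (intro nth_mem) simp
    then show "(p @ [c]) ! j \<noteq> 0" using y(1) by fastforce
  qed (use k y in auto)
  moreover have "replicate (Suc k) 0 \<in> hverts n (Suc k)" using c unfolding hverts_def by auto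
  moreover have "p @ [c] \<in> hverts n (Suc k)" using y unfolding hverts_def by auto
  moreover have "replicate (Suc k) 0 \<noteq> p @ [c]" using c by (metis last_replicate last_snoc atLeastLessThan_iff not_one_le_zero Zero_not_Suc)
  ultimately show ?thesis unfolding hadj_def by blast
qed

lemma P2_sub:
  assumes k: "k \<ge> 1"
  shows "P2 n k \<subseteq> htriangles n (Suc k)"
proof
  fix T assume "T \<in> P2 n k"
  then obtain p B where p: "p \<in> Snz n k" and B: "B \<subseteq> {1..<n}" "card B = 2"
     and T: "T = insert (replicate (Suc k) 0) ((\<lambda>c. p @ [c]) ` B)"
    unfolding P2_def by auto
  obtain c d where cd: "B = {c,d}" "c \<noteq> d" using B(2) by (meson card_2_iff)
  have c: "c \<in> {1..<n}" and d: "d \<in> {1..<n}" using B cd by auto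
  define z where "z = (replicate (Suc k) 0 :: nat list)"
  have T': "T = {z, p@[c], p@[d]}" using T cd z_def by auto
  have zc: "hadj n (Suc k) z (p@[c])" and zd: "hadj n (Suc k) z (p@[d])"
    using z0_adj[OF k p c] z0_adj[OF k p d] z_def by auto
  have plen: "length p = k" using p unfolding Snz_def by auto
  have cd_adj: "hadj n (Suc k) (p@[c]) (p@[d])"
  proof -
    have "rule1 (Suc k) (p@[c]) (p@[d])" unfolding rule1_def using plen cd by auto
    moreover have "p @ [c] \<in> hverts n (Suc k)" "p @ [d] \<in> hverts n (Suc k)"
      using zc zd unfolding hadj_def by auto
    ultimately show ?thesis unfolding hadj_def using cd by auto
  qed
  have ne: "z \<noteq> p@[c]" "z \<noteq> p@[d]" "p@[c] \<noteq> p@[d]" using zc zd cd unfolding hadj_def by auto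
  show "T \<in> htriangles n (Suc k)" unfolding htriangles_def
  proof (intro CollectI conjI ballI impI)
    show "T \<subseteq> hverts n (Suc k)" using T' zc zd unfolding hadj_def by auto
    show "card T = 3" using T' ne by simp
    fix x y assume "x \<in> T" "y \<in> T" "x \<noteq> y"
    then show "hadj n (Suc k) x y" using T' zc zd cd_adj hadj_sym by auto
  qed
qed

lemma P3_sub:
  assumes k: "k \<ge> 1"
  shows "P3 n k \<subseteq> htriangles n (Suc k)"
proof
  fix T assume "T \<in> P3 n k"
  then have TC: "T \<subseteq> (\<lambda>a. a # replicate k 0) ` {1..<n}" and c3: "card T = 3" unfolding P3_def by auto
  show "T \<in> htriangles n (Suc k)" unfolding htriangles_def
  proof (intro CollectI conjI ballI impI)
    show "T \<subseteq> hverts n (Suc k)"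
    proof
      fix x assume "x \<in> T"
      then obtain a where "a \<in> {1..<n}" "x = a # replicate k 0" using TC by auto
      then show "x \<in> hverts n (Suc k)" unfolding hverts_def by auto
    qed
    show "card T = 3" by (rule c3)
    fix x y assume "x \<in> T" "y \<in> T" "x \<noteq> y"
    note xyT = this
    obtain a where a: "a \<in> {1..<n}" "x = a # replicate k 0" using TC xyT(1) by auto
    obtain b where b: "b \<in> {1..<n}" "y = b # replicate k 0" using TC xyT(2) by auto
    have ab: "a \<in> {1..<n}" "b \<in> {1..<n}" "x = a # replicate k 0" "y = b # replicate k 0" "a \<noteq> b"
      using a b xyT(3) by auto
    have "replicate k 0 \<in> hverts n k" using ab unfolding hverts_def by auto
    then show "hadj n (Suc k) x y" using hadj_cross[OF k ab(5)] ab by auto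
  qed
qed

lemma decomp:
  assumes k: "k \<ge> 1"
  shows "htriangles n (Suc k) = P1 n k \<union> P2 n k \<union> P3 n k"
  using decomp_sub[OF k] P1_sub[OF k] P2_sub[OF k] P3_sub[OF k] by blast

lemma finite_hverts: "finite (hverts n k)"
proof -
  have "hverts n k = {xs. set xs \<subseteq> {..<n} \<and> length xs = k}" unfolding hverts_def by auto
  then show ?thesis using finite_lists_length_eq[of "{..<n}" k] by simp
qed

lemma finite_htri: "finite (htriangles n k)"
  by (rule finite_subset[of _ "Pow (hverts n k)"]) (auto simp: htriangles_def finite_hverts)

lemma card_Snz: "card (Snz n k) = (n - 1) ^ k"
  unfolding Snz_def using card_lists_length_eq[of "{1..<n}" k] by simp

lemma finite_Snz: "finite (Snz n k)"
  unfolding Snz_def using finite_lists_length_eq[of "{1..<n}" k] by simp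

lemma card_P1: "card (P1 n k) = n * card (htriangles n k)"
proof -
  have "inj_on (\<lambda>(a,T). (\<lambda>x. a # x) ` T) ({..<n} \<times> htriangles n k)"
  proof (rule inj_onI, clarify)
    fix a T b U
    assume T: "T \<in> htriangles n k" and U: "U \<in> htriangles n k"
      and eq: "(\<lambda>x. a # x) ` T = (\<lambda>x. b # x) ` U"
    have "T \<noteq> {}" using htri_facts(2)[OF T] by auto
    then obtain t where t: "t \<in> T" by blast
    then have "a # t \<in> (\<lambda>x. b # x) ` U" using eq by blast
    then have ab: "a = b" by auto
    have "inj (\<lambda>x. a # x)" by (simp add: inj_on_def)
    then have "T = U" using eq ab by (simp add: inj_image_eq_iff)
    then show "a = b \<and> T = U" using ab by simp
  qed
  then have "card (P1 n k) = card ({..<n} \<times> htriangles n k)" unfolding P1_def by (rule card_image)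
  then show ?thesis by (simp add: card_cartesian_product)
qed

lemma card_P2: "card (P2 n k) = (n - 1) ^ k * ((n - 1) choose 2)"
proof -
  let ?z = "replicate (Suc k) (0::nat)"
  have nz: "p @ [c] \<noteq> ?z" if "c \<in> {1..<n}" for p c
  proof
    assume "p @ [c] = ?z"
    then have "last (p @ [c]) = last ?z" by simp
    then have "c = 0" by simp
    then show False using that by simp
  qed
  have "inj_on (\<lambda>(p,B). insert ?z ((\<lambda>c. p @ [c]) ` B)) (Snz n k \<times> {B. B \<subseteq> {1..<n} \<and> card B = 2})"
  proof (rule inj_onI, clarify)
    fix p B q C
    assume B: "B \<subseteq> {1..<n}" "card B = 2" and C: "C \<subseteq> {1..<n}" "card C = 2"
      and p: "p \<in> Snz n k" and q: "q \<in> Snz n k"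
      and eq: "insert ?z ((\<lambda>c. p @ [c]) ` B) = insert ?z ((\<lambda>c. q @ [c]) ` C)"
    have n1: "?z \<notin> (\<lambda>c. p @ [c]) ` B"
    proof
      assume "?z \<in> (\<lambda>c. p @ [c]) ` B"
      then obtain c where "c \<in> B" "?z = p @ [c]" by blast
      then show False using nz[of c p] B by auto
    qed
    have n2: "?z \<notin> (\<lambda>c. q @ [c]) ` C"
    proof
      assume "?z \<in> (\<lambda>c. q @ [c]) ` C"
      then obtain c where "c \<in> C" "?z = q @ [c]" by blast
      then show False using nz[of c q] C by auto
    qed
    have eq2: "(\<lambda>c. p @ [c]) ` B = (\<lambda>c. q @ [c]) ` C" using eq insert_ident[OF n1 n2] by simp
    have "B \<noteq> {}" using B by auto
    then obtain c where c: "c \<in> B" by blast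
    then have "p @ [c] \<in> (\<lambda>c. q @ [c]) ` C" using eq2 by blast
    then obtain c' where "p @ [c] = q @ [c']" by blast
    then have "butlast (p @ [c]) = butlast (q @ [c'])" by simp
    then have pq: "p = q" by simp
    have "inj (\<lambda>c. p @ [c])" by (simp add: inj_on_def)
    then have "B = C" using eq2 pq by (simp add: inj_image_eq_iff)
    then show "p = q \<and> B = C" using pq by simp
  qed
  then have "card (P2 n k) = card (Snz n k \<times> {B. B \<subseteq> {1..<n} \<and> card B = 2})"
    unfolding P2_def by (rule card_image)
  also have "\<dots> = card (Snz n k) * card {B. B \<subseteq> {1..<n} \<and> card B = 2}"
    by (simp add: card_cartesian_product)
  also have "card {B. B \<subseteq> {1..<n} \<and> card B = 2} = (n - 1) choose 2"
    using n_subsets[of "{1..<n}" 2] by simp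
  finally show ?thesis by (simp add: card_Snz)
qed

lemma card_P3: "card (P3 n k) = (n - 1) choose 3"
proof -
  have "inj_on (\<lambda>a. a # replicate k (0::nat)) {1..<n}" by (simp add: inj_on_def)
  then have "card ((\<lambda>a. a # replicate k (0::nat)) ` {1..<n}) = n - 1" by (simp add: card_image)
  then show ?thesis unfolding P3_def
    using n_subsets[of "(\<lambda>a. a # replicate k (0::nat)) ` {1..<n}" 3] by simp
qed

lemma finite_P: "finite (P1 n k)" "finite (P2 n k)" "finite (P3 n k)"
proof -
  show "finite (P1 n k)" unfolding P1_def using finite_htri by simp
  have "finite {B. B \<subseteq> {1..<n::nat} \<and> card B = 2}" by simp
  then show "finite (P2 n k)" unfolding P2_def using finite_Snz by simp
  show "finite (P3 n k)" unfolding P3_def by simp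
qed

lemma disj:
  assumes k: "k \<ge> 1"
  shows "P1 n k \<inter> P2 n k = {}" "P1 n k \<inter> P3 n k = {}" "P2 n k \<inter> P3 n k = {}"
proof -
  show "P1 n k \<inter> P2 n k = {}"
  proof (rule ccontr)
    assume "P1 n k \<inter> P2 n k \<noteq> {}"
    then obtain T where T1: "T \<in> P1 n k" and T2: "T \<in> P2 n k" by blast
    obtain a T' where T: "T = (\<lambda>x. a # x) ` T'" using T1 unfolding P1_def by auto
    obtain p B where p: "p \<in> Snz n k" and B: "B \<subseteq> {1..<n}" "card B = 2"
      and TT: "T = insert (replicate (Suc k) 0) ((\<lambda>c. p @ [c]) ` B)"
      using T2 unfolding P2_def by auto
    have "B \<noteq> {}" using B by auto
    then obtain c where c: "c \<in> B" by blast
    have "replicate (Suc k) 0 \<in> T" "p @ [c] \<in> T" using TT c by auto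
    then have h: "hd (replicate (Suc k) 0) = a" "hd (p @ [c]) = a" using T by auto
    obtain q p' where "p = q # p'" using p k unfolding Snz_def by (cases p) auto
    then have "hd (p @ [c]) \<in> {1..<n}" using p unfolding Snz_def by auto
    then show False using h by simp
  qed
  show "P1 n k \<inter> P3 n k = {}"
  proof (rule ccontr)
    assume "P1 n k \<inter> P3 n k \<noteq> {}"
    then obtain T where T1: "T \<in> P1 n k" and T3: "T \<in> P3 n k" by blast
    obtain a T' where T: "T = (\<lambda>x. a # x) ` T'" using T1 unfolding P1_def by auto
    have TC: "T \<subseteq> (\<lambda>a. a # replicate k 0) ` {1..<n}" and c3: "card T = 3" using T3 unfolding P3_def by auto
    have "T \<noteq> {}" using c3 by auto
    then obtain x where x: "x \<in> T" by blast
    have "card (T - {x}) = 2" using c3 x by simp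
    then have "T - {x} \<noteq> {}" by (intro notI) simp
    then obtain y where y: "y \<in> T" "y \<noteq> x" by blast
    have xy: "x \<in> T" "y \<in> T" "x \<noteq> y" using x y by auto
    have "hd x = a" "hd y = a" using xy T by auto
    moreover obtain b where "x = b # replicate k 0" using TC xy by auto
    moreover obtain d where "y = d # replicate k 0" using TC xy by auto
    ultimately show False using xy by simp
  qed
  show "P2 n k \<inter> P3 n k = {}"
  proof (rule ccontr)
    assume "P2 n k \<inter> P3 n k \<noteq> {}"
    then obtain T where T2: "T \<in> P2 n k" and T3: "T \<in> P3 n k" by blast
    have "replicate (Suc k) 0 \<in> T" using T2 unfolding P2_def by auto
    then show False using T3 unfolding P3_def by auto
  qed
qed

lemma recur:
  assumes k: "k \<ge> 1"
  shows "card (htriangles n (Suc k)) = n * card (htriangles n k) + (n - 1) ^ k * ((n - 1) choose 2) + ((n - 1) choose 3)"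
proof -
  have "card (htriangles n (Suc k)) = card (P1 n k \<union> P2 n k \<union> P3 n k)" using decomp[OF k] by simp
  also have "\<dots> = card (P1 n k \<union> P2 n k) + card (P3 n k)"
  proof (rule card_Un_disjoint)
    show "finite (P1 n k \<union> P2 n k)" using finite_P(1,2) by blast
    show "finite (P3 n k)" by (rule finite_P(3))
    show "(P1 n k \<union> P2 n k) \<inter> P3 n k = {}" using disj(2,3)[OF k] by blast
  qed
  also have "card (P1 n k \<union> P2 n k) = card (P1 n k) + card (P2 n k)"
    by (rule card_Un_disjoint) (use finite_P disj[OF k] in blast)+
  finally show ?thesis by (simp add: card_P1 card_P2 card_P3)
qed

lemma hadj_one: "hadj n 1 [a] [b] \<longleftrightarrow> a < n \<and> b < n \<and> a \<noteq> b"
proof -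
  have "\<not> rule2 1 x y" for x y unfolding rule2_def by auto
  moreover have "\<not> rule3 1 x y" for x y unfolding rule3_def by auto
  moreover have "rule1 1 [a] [b] \<longleftrightarrow> a \<noteq> b" unfolding rule1_def by auto
  ultimately show ?thesis unfolding hadj_def hverts_def by auto
qed

lemma hverts_one: "x \<in> hverts n 1 \<longleftrightarrow> (\<exists>a. a < n \<and> x = [a])"
  unfolding hverts_def by (cases x) auto

lemma card_base: "card (htriangles n 1) = n choose 3"
proof -
  have injs: "inj (\<lambda>a::nat. [a])" by (simp add: inj_on_def)
  have eq: "htriangles n 1 = (\<lambda>B. (\<lambda>a. [a]) ` B) ` {B. B \<subseteq> {..<n} \<and> card B = 3}"
  proof (rule set_eqI, rule iffI)
    fix T assume T: "T \<in> htriangles n 1"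
    note TV = htri_facts(1)[OF T] and c3 = htri_facts(2)[OF T] and adj = htri_facts(3)[OF T]
    have col: "[hd x] = x" if "x \<in> T" for x
    proof -
      have "x \<in> hverts n 1" using TV that by blast
      then obtain a where "x = [a]" using hverts_one by blast
      then show ?thesis by simp
    qed
    have Teq: "T = (\<lambda>a. [a]) ` (hd ` T)"
    proof -
      have "(\<lambda>a. [a]) ` (hd ` T) = (\<lambda>x. [hd x]) ` T" by (simp add: image_image)
      also have "\<dots> = T" using col by (simp cong: image_cong)
      finally show ?thesis by (rule sym)
    qed
    have inj: "inj_on hd T" using col by (metis inj_onI)
    have "hd ` T \<subseteq> {..<n}"
    proof
      fix a assume "a \<in> hd ` T"
      then obtain x where x: "x \<in> T" "a = hd x" by blast
      then have "x \<in> hverts n 1" using TV by blast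
      then show "a \<in> {..<n}" using x hverts_one by auto
    qed
    moreover have "card (hd ` T) = 3" using card_image[OF inj] c3 by simp
    ultimately have mem: "hd ` T \<in> {B. B \<subseteq> {..<n} \<and> card B = 3}" by simp
    show "T \<in> (\<lambda>B. (\<lambda>a. [a]) ` B) ` {B. B \<subseteq> {..<n} \<and> card B = 3}"
      by (rule image_eqI[OF _ mem]) (rule Teq)
  next
    fix T assume "T \<in> (\<lambda>B. (\<lambda>a. [a]) ` B) ` {B. B \<subseteq> {..<n} \<and> card B = 3}"
    then obtain B where B: "B \<subseteq> {..<n}" "card B = 3" and T: "T = (\<lambda>a. [a]) ` B" by blast
    show "T \<in> htriangles n 1" unfolding htriangles_def
    proof (intro CollectI conjI ballI impI)
      show "T \<subseteq> hverts n 1" using B T hverts_one by auto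
      show "card T = 3" using T B card_image[of "\<lambda>a. [a]" B] injs by (simp add: inj_on_def)
      fix x y assume "x \<in> T" "y \<in> T" "x \<noteq> y"
      then show "hadj n 1 x y" using T B hadj_one by auto
    qed
  qed
  have "inj_on (\<lambda>B. (\<lambda>a. [a]) ` B) {B. B \<subseteq> {..<n} \<and> card B = 3}"
    by (rule inj_onI) (use injs in \<open>simp add: inj_image_eq_iff\<close>)
  then have "card (htriangles n 1) = card {B. B \<subseteq> {..<n} \<and> card B = 3}"
    unfolding eq by (rule card_image)
  also have "\<dots> = n choose 3" using n_subsets[of "{..<n}" 3] by simp
  finally show ?thesis .
qed

lemma choose2_rat: "(of_nat (m choose 2) :: rat) = of_nat m * (of_nat m - 1) / 2"
proof (induction m)
  case 0 then show ?case by simp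
next
  case (Suc m)
  have "Suc m choose 2 = (m choose 1) + (m choose 2)"
    by (simp add: numeral_2_eq_2)
  then show ?case using Suc by (simp add: field_simps)
qed

lemma choose3_rat: "(of_nat (m choose 3) :: rat) = of_nat m * (of_nat m - 1) * (of_nat m - 2) / 6"
proof (induction m)
  case 0 then show ?case by simp
next
  case (Suc m)
  have "Suc m choose 3 = (m choose 2) + (m choose 3)"
    by (simp add: numeral_3_eq_3 numeral_2_eq_2)
  then show ?case using Suc choose2_rat[of m] by (simp add: field_simps)
qed

theorem mainTheorem11:
  fixes n k :: nat
  assumes "n \<ge> 2" and "k \<ge> 1"
  shows "(of_nat (card (htriangles n k)) :: rat) =
    (1/2) * (of_nat n - 2) * (1 - of_nat n / 3 - (of_nat n - 1) ^ (k + 1)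
       + (2/3) * of_nat n ^ k * (2 * of_nat n - 3))"
  using assms(2)
proof (induction k rule: nat_induct_at_least)
  case base
  have "(of_nat (card (htriangles n 1)) :: rat) = of_nat n * (of_nat n - 1) * (of_nat n - 2) / 6"
  proof -
    have cb: "card (htriangles n (Suc 0)) = n choose 3" using card_base[of n] by simp
    show ?thesis by (simp add: cb choose3_rat)
  qed
  then show ?case by (simp add: field_simps power2_eq_square)
next
  case (Suc k)
  have n1: "(of_nat (n - Suc 0) :: rat) = of_nat n - 1" using assms(1) by (simp add: of_nat_diff)
  have "(of_nat (card (htriangles n (Suc k))) :: rat) =
     of_nat n * of_nat (card (htriangles n k)) + (of_nat n - 1) ^ k * ((of_nat n - 1) * (of_nat n - 1 - 1) / 2)
     + (of_nat n - 1) * (of_nat n - 1 - 1) * (of_nat n - 1 - 2) / 6"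
    using recur[OF Suc.hyps] by (simp add: choose2_rat choose3_rat n1)
  also have "\<dots> = (1/2) * (of_nat n - 2) * (1 - of_nat n / 3 - (of_nat n - 1) ^ (Suc k + 1)
       + (2/3) * of_nat n ^ Suc k * (2 * of_nat n - 3))"
    unfolding Suc.IH by (simp add: field_simps power_Suc)
  finally show ?case .
qed

end
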